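(* Let $k\ge 1$, $n=2k$, $a\in\mathbb{D}\setminus\{0\}$, $\sigma_a(z)=\frac{z-a}{1-\overline{a}z}$, $h(z)=z^{n}$, and let $B=\sigma_a\circ h\circ\sigma_a^{-1}$ be a reducible Blaschke product of degree $2k$ with conjugate factor $\sigma_a$. List the $2k$ distinct $2k$-th roots of $a$ as $\omega_1,\dots,\omega_{2k}$ in increasing order of principal argument in $[0,2\pi)$ (indices taken modulo $2k$), so that the zeros of $B$ are $\sigma_a(\omega_1),\dots,\sigma_a(\omega_{2k})$. Then: (1) for every $j$, the hyperbolic geodesic in the Poincaré disk through the "opposite" zeros $\sigma_a(\omega_j)$ and $\sigma_a(-\omega_j)=\sigma_a(\omega_{j+k})$ passes through $-a$; thus $-a$ lies at the intersection of the hyperbolic geodesics through opposite pairs of zeros of $B$; (2) for every $j$, the unsigned angle at $\sigma_a(\omega_j)$ between the hyperbolic geodesic through $\sigma_a(\omega_{j-1}),\sigma_a(\omega_j)$ and the hyperbolic geodesic through $\sigma_a(\omega_j),\sigma_a(\omega_{j+1})$ equals the unsigned angle at $\omega_j$ between the hyperbolic geodesic through $\omega_{j-1},\omega_j$ and the hyperbolic geodesic through $\omega_j,\omega_{j+1}$.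
   Context: $\mathbb{D}$ is the open unit disk with the Poincaré (hyperbolic) metric; its geodesics are the diameters of $\mathbb{D}$ and the arcs in $\mathbb{D}$ of circles meeting the unit circle orthogonally. A degree-$n$ Blaschke product $B$ is called reducible if $B=\sigma_a\circ h\circ\sigma_a^{-1}$ for some $a\in\mathbb{D}$, with $\sigma_a(z)=\frac{z-a}{1-\overline{a}z}$, $h(z)=z^n$; $\sigma_a$ is its conjugate factor. *)

theory Defs
  imports "HOL-Analysis.Analysis"
begin

definition sigma :: "complex \<Rightarrow> complex \<Rightarrow> complex" where
  "sigma a z = (z - a) / (1 - cnj a * z)"

definition arg02 :: "complex \<Rightarrow> real" where
  "arg02 z = (if Arg z < 0 then Arg z + 2 * pi else Arg z)"

text \<open>Hyperbolic geodesics of the Poincare disk: diameters, and arcs inside the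
  disk of circles meeting the unit circle orthogonally (|c|^2 = 1 + r^2).\<close>
definition is_hgeodesic :: "complex set \<Rightarrow> bool" where
  "is_hgeodesic G \<longleftrightarrow>
     (\<exists>u. cmod u = 1 \<and> G = {complex_of_real t * u | t. \<bar>t\<bar> < 1}) \<or>
     (\<exists>c r. r > 0 \<and> (cmod c)\<^sup>2 = 1 + r\<^sup>2 \<and> G = {z. cmod (z - c) = r \<and> cmod z < 1})"

definition hgeodesic :: "complex \<Rightarrow> complex \<Rightarrow> complex set" where
  "hgeodesic p q = (THE G. is_hgeodesic G \<and> p \<in> G \<and> q \<in> G)"

text \<open>Unit tangent direction at p of the geodesic G, pointing along G towards q
  (limit of the unit chords from p to points of the branch of G - {p} containing q).\<close>
definition tangent_dir :: "complex set \<Rightarrow> complex \<Rightarrow> complex \<Rightarrow> complex" where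
  "tangent_dir G p q =
     Lim (at p within connected_component_set (G - {p}) q)
         (\<lambda>z. (z - p) / complex_of_real (cmod (z - p)))"

definition hangle :: "complex \<Rightarrow> complex \<Rightarrow> complex \<Rightarrow> real" where
  "hangle v u w =
     arccos (Re (tangent_dir (hgeodesic v u) v u * cnj (tangent_dir (hgeodesic v w) v w)))"

end

theory Submission
  imports Defs
begin


lemma cnorm_sq: "complex_of_real ((cmod z)^2) = z * cnj z"
  by (rule complex_norm_square)

lemma den_nz: "cmod b < 1 \<Longrightarrow> cmod z < 1 \<Longrightarrow> 1 - cnj b * z \<noteq> 0"
proof
  assume "cmod b < 1" "cmod z < 1" "1 - cnj b * z = 0"
  then have "cmod (cnj b * z) = 1" by (metis eq_iff_diff_eq_0 norm_one)
  moreover have "cmod (cnj b * z) < 1" using \<open>cmod b < 1\<close> \<open>cmod z < 1\<close>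
    by (simp add: norm_mult) (metis mult_strict_mono' norm_ge_zero mult_1_right less_le_trans abs_norm_cancel dual_order.strict_trans2 mult_le_one less_imp_le norm_not_less_zero mult_less_cancel_left1 not_le)
  ultimately show False by simp
qed

lemma sigma_inv: "cmod b < 1 \<Longrightarrow> cmod z < 1 \<Longrightarrow> sigma (-b) (sigma b z) = z"
proof -
  assume b: "cmod b < 1" and z: "cmod z < 1"
  have D: "1 - cnj b * z \<noteq> 0" using den_nz[OF b z] .
  have bb: "1 - cnj b * b \<noteq> 0" using den_nz[OF b b] .
  have n: "sigma b z + b = z * (1 - cnj b * b) / (1 - cnj b * z)"
    using D unfolding sigma_def by (simp add: field_simps)
  have d: "1 + cnj b * sigma b z = (1 - cnj b * b) / (1 - cnj b * z)"
    using D unfolding sigma_def by (simp add: field_simps)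
  have "sigma (-b) (sigma b z) = (sigma b z + b) / (1 + cnj b * sigma b z)"
    by (simp add: sigma_def)
  also have "\<dots> = z" using n d D bb by simp
  finally show ?thesis .
qed

lemma sigma_norm_identity:
  "(cmod (1 - cnj b * z))^2 - (cmod (z - b))^2 = (1 - (cmod b)^2) * (1 - (cmod z)^2)"
proof -
  have "complex_of_real ((cmod (1 - cnj b * z))^2 - (cmod (z - b))^2) =
        complex_of_real ((1 - (cmod b)^2) * (1 - (cmod z)^2))"
    by (simp only: of_real_diff of_real_mult cnorm_sq of_real_1) (simp add: algebra_simps)
  then show ?thesis using of_real_eq_iff by blast
qed

lemma sigma_disk: "cmod b < 1 \<Longrightarrow> cmod z < 1 \<Longrightarrow> cmod (sigma b z) < 1"
proof -
  assume b: "cmod b < 1" and z: "cmod z < 1"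
  have D: "1 - cnj b * z \<noteq> 0" using den_nz[OF b z] .
  have "(1 - (cmod b)^2) * (1 - (cmod z)^2) > 0"
    using b z by (simp add: abs_square_less_1)
  then have "(cmod (z - b))^2 < (cmod (1 - cnj b * z))^2" using sigma_norm_identity[of b z] by linarith
  then have "cmod (z - b) < cmod (1 - cnj b * z)" by (simp add: power_less_imp_less_base)
  then show ?thesis using D unfolding sigma_def by (simp add: norm_divide divide_less_eq)
qed

lemma sigma_neg_disk: "cmod b < 1 \<Longrightarrow> cmod (-b) < 1" by simp

lemma sigma_inj: "cmod b < 1 \<Longrightarrow> cmod z < 1 \<Longrightarrow> cmod w < 1 \<Longrightarrow> sigma b z = sigma b w \<Longrightarrow> z = w"
  by (metis sigma_inv)

lemma sigma_diff: "cmod b < 1 \<Longrightarrow> cmod z < 1 \<Longrightarrow> cmod p < 1 \<Longrightarrow>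
   sigma b z - sigma b p = (z - p) * ((1 - cnj b * b) / ((1 - cnj b * z) * (1 - cnj b * p)))"
proof -
  assume b: "cmod b < 1" and z: "cmod z < 1" and p: "cmod p < 1"
  have D: "1 - cnj b * z \<noteq> 0" using den_nz[OF b z] .
  have E: "1 - cnj b * p \<noteq> 0" using den_nz[OF b p] .
  show ?thesis using D E unfolding sigma_def by (simp add: field_simps)
qed

lemma sigma_zero: "sigma b 0 = - b" by (simp add: sigma_def)
lemma sigma_self: "sigma b b = 0" by (simp add: sigma_def)



definition gset :: "real \<Rightarrow> complex \<Rightarrow> complex set" where
  "gset A \<beta> = {z. cmod z < 1 \<and>
     complex_of_real A * z * cnj z + cnj \<beta> * z + \<beta> * cnj z + complex_of_real A = 0}"

lemma gset_scale: "c \<noteq> 0 \<Longrightarrow> gset (c * A) (complex_of_real c * \<beta>) = gset A \<beta>"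
proof -
  assume c: "c \<noteq> 0"
  have "\<And>z. complex_of_real (c * A) * z * cnj z + cnj (complex_of_real c * \<beta>) * z
        + (complex_of_real c * \<beta>) * cnj z + complex_of_real (c * A)
       = complex_of_real c * (complex_of_real A * z * cnj z + cnj \<beta> * z + \<beta> * cnj z + complex_of_real A)"
    by (simp add: algebra_simps)
  then show ?thesis using c unfolding gset_def by (simp only: mult_eq_0_iff of_real_eq_0_iff simp_thms)
qed

lemma gset_diam:
  assumes u: "cmod u = 1"
  shows "{complex_of_real t * u | t. \<bar>t\<bar> < 1} = gset 0 (\<i> * u)"
proof -
  have uu: "u * cnj u = 1" using u complex_norm_square[of u] by simp
  show ?thesis
  proof (intro set_eqI iffI)
    fix z assume "z \<in> {complex_of_real t * u | t. \<bar>t\<bar> < 1}"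
    then obtain t where t: "\<bar>t\<bar> < 1" "z = complex_of_real t * u" by auto
    have "cmod z < 1" using t u by (simp add: norm_mult)
    moreover have "cnj (\<i> * u) * z + (\<i> * u) * cnj z = 0"
      using t uu by (simp add: algebra_simps)
    ultimately show "z \<in> gset 0 (\<i> * u)" unfolding gset_def by simp
  next
    fix z assume "z \<in> gset 0 (\<i> * u)"
    then have z: "cmod z < 1" "cnj (\<i> * u) * z + (\<i> * u) * cnj z = 0" unfolding gset_def by auto
    define s where "s = cnj u * z"
    have "cnj s = s" using z(2) unfolding s_def
      by (simp add: algebra_simps)
    then have "Im s = 0" by (simp add: complex_eq_iff)
    then have sr: "s = complex_of_real (Re s)" by (simp add: complex_eq_iff)
    have zs: "z = u * s" unfolding s_def by (simp add: mult.assoc[symmetric] uu)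
    then have "z = complex_of_real (Re s) * u" using sr by (metis mult.commute)
    moreover have "cmod s < 1" using z(1) zs u by (simp add: norm_mult)
    then have "\<bar>Re s\<bar> < 1" using sr by (metis norm_of_real)
    ultimately show "z \<in> {complex_of_real t * u | t. \<bar>t\<bar> < 1}" by blast
  qed
qed

lemma gset_circ:
  assumes r: "r > 0" and c: "(cmod c)^2 = 1 + r^2"
  shows "{z. cmod (z - c) = r \<and> cmod z < 1} = gset 1 (- c)"
proof -
  have key: "complex_of_real 1 * z * cnj z + cnj (-c) * z + (-c) * cnj z + complex_of_real 1
        = complex_of_real ((cmod (z - c))^2 - r^2)" for z
  proof -
    have e1: "complex_of_real ((cmod (z - c))^2) = (z - c) * cnj (z - c)" by (rule complex_norm_square)
    have e2: "complex_of_real ((cmod c)^2) = c * cnj c" by (rule complex_norm_square)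
    have e3: "complex_of_real (r^2) = c * cnj c - 1" using c e2 by (metis add_diff_cancel_left' of_real_1 of_real_add)
    have "complex_of_real ((cmod (z - c))^2 - r^2) = (z - c) * cnj (z - c) - (c * cnj c - 1)"
      by (simp only: of_real_diff e1 e3)
    also have "\<dots> = complex_of_real 1 * z * cnj z + cnj (-c) * z + (-c) * cnj z + complex_of_real 1"
      by (simp add: algebra_simps)
    finally show ?thesis by simp
  qed
  have "z \<in> {z. cmod (z - c) = r \<and> cmod z < 1} \<longleftrightarrow> z \<in> gset 1 (- c)" for z
  proof -
    have "cmod (z - c) = r \<longleftrightarrow> (cmod (z - c))^2 - r^2 = 0"
      using r by (metis eq_iff_diff_eq_0 norm_ge_zero less_imp_le power2_eq_iff_nonneg)
    then show ?thesis unfolding gset_def mem_Collect_eq key of_real_eq_0_iff by blast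
  qed
  then show ?thesis by blast
qed

lemma hgeo_iff: "is_hgeodesic G \<longleftrightarrow> (\<exists>A \<beta>. A^2 < (cmod \<beta>)^2 \<and> G = gset A \<beta>)"
proof
  assume "is_hgeodesic G"
  then consider (d) u where "cmod u = 1" "G = {complex_of_real t * u | t. \<bar>t\<bar> < 1}"
    | (c) c r where "r > 0" "(cmod c)\<^sup>2 = 1 + r\<^sup>2" "G = {z. cmod (z - c) = r \<and> cmod z < 1}"
    unfolding is_hgeodesic_def by blast
  then show "\<exists>A \<beta>. A^2 < (cmod \<beta>)^2 \<and> G = gset A \<beta>"
  proof cases
    case d then show ?thesis using gset_diam[of u] by (intro exI[of _ 0] exI[of _ "\<i> * u"] conjI) (simp_all add: norm_mult)
  next
    case c then show ?thesis using gset_circ[of r c] by (intro exI[of _ 1] exI[of _ "-c"] conjI) simp_all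
  qed
next
  assume "\<exists>A \<beta>. A^2 < (cmod \<beta>)^2 \<and> G = gset A \<beta>"
  then obtain A \<beta> where nd: "A^2 < (cmod \<beta>)^2" and G: "G = gset A \<beta>" by blast
  show "is_hgeodesic G"
  proof (cases "A = 0")
    case True
    then have b0: "\<beta> \<noteq> 0" using nd by auto
    define u where "u = - \<i> * \<beta> / complex_of_real (cmod \<beta>)"
    have u1: "cmod u = 1" using b0 unfolding u_def by (simp add: norm_divide norm_mult)
    have "gset 0 (\<i> * u) = gset ((1 / cmod \<beta>) * 0) (complex_of_real (1 / cmod \<beta>) * \<beta>)"
      unfolding u_def by (simp add: field_simps)
    also have "\<dots> = gset 0 \<beta>" using b0 by (intro gset_scale) simp
    finally have "G = {complex_of_real t * u | t. \<bar>t\<bar> < 1}" using gset_diam[OF u1] G True by simp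
    then show ?thesis unfolding is_hgeodesic_def using u1 by (intro disjI1 exI[of _ u] conjI)
  next
    case False
    define c where "c = - \<beta> / complex_of_real A"
    define r where "r = sqrt ((cmod c)^2 - 1)"
    have cgt: "(cmod c)^2 > 1" using nd False unfolding c_def
      by (simp add: norm_divide power_divide divide_less_eq)
    then have r: "r > 0" "(cmod c)^2 = 1 + r^2" unfolding r_def by auto
    have "gset 1 (- c) = gset ((1 / A) * A) (complex_of_real (1 / A) * \<beta>)"
      using False unfolding c_def by (simp add: field_simps)
    also have "\<dots> = gset A \<beta>" using False by (intro gset_scale) simp
    finally have "G = {z. cmod (z - c) = r \<and> cmod z < 1}" using gset_circ[OF r] G by simp
    then show ?thesis unfolding is_hgeodesic_def using r by (intro disjI2 exI[of _ c] exI[of _ r] conjI)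
  qed
qed



definition Qf :: "real \<Rightarrow> complex \<Rightarrow> complex \<Rightarrow> complex" where
  "Qf A \<beta> z = complex_of_real A * z * cnj z + cnj \<beta> * z + \<beta> * cnj z + complex_of_real A"

lemma gset_Qf: "gset A \<beta> = {z. cmod z < 1 \<and> Qf A \<beta> z = 0}"
  unfolding gset_def Qf_def by simp

definition nA :: "complex \<Rightarrow> real \<Rightarrow> complex \<Rightarrow> real" where
  "nA b A \<beta> = A * (1 + (cmod b)^2) + 2 * Re (cnj \<beta> * b)"
definition nB :: "complex \<Rightarrow> real \<Rightarrow> complex \<Rightarrow> complex" where
  "nB b A \<beta> = 2 * complex_of_real A * b + \<beta> + cnj \<beta> * b^2"

lemma nA_complex: "complex_of_real (nA b A \<beta>) = complex_of_real A * (1 + b * cnj b) + cnj \<beta> * b + \<beta> * cnj b"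
proof -
  have "complex_of_real (2 * Re (cnj \<beta> * b)) = cnj \<beta> * b + \<beta> * cnj b"
    using complex_add_cnj[of "cnj \<beta> * b"] by simp
  then show ?thesis unfolding nA_def of_real_add of_real_mult complex_norm_square by (simp add: algebra_simps)
qed

lemma Qf_transform:
  assumes b: "cmod b < 1" and z: "cmod z < 1"
  shows "Qf A \<beta> (sigma (-b) z) * ((1 + cnj b * z) * cnj (1 + cnj b * z)) = Qf (nA b A \<beta>) (nB b A \<beta>) z"
proof -
  define D where "D = 1 + cnj b * z"
  define w where "w = sigma (-b) z"
  have Dn: "D \<noteq> 0" using den_nz[of "-b" z] b z unfolding D_def by simp
  have wD: "w * D = z + b" unfolding w_def D_def sigma_def using Dn[unfolded D_def] by simp
  have cwD: "cnj w * cnj D = cnj z + cnj b" using arg_cong[OF wD, of cnj] by simp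
  have "Qf A \<beta> w * (D * cnj D) = complex_of_real A * (w * D) * (cnj w * cnj D) + cnj \<beta> * (w * D) * cnj D
          + \<beta> * (cnj w * cnj D) * D + complex_of_real A * D * cnj D"
    unfolding Qf_def by (simp add: algebra_simps)
  also have "\<dots> = complex_of_real A * (z + b) * (cnj z + cnj b) + cnj \<beta> * (z + b) * cnj D
          + \<beta> * (cnj z + cnj b) * D + complex_of_real A * D * cnj D"
    by (simp only: wD cwD)
  also have "\<dots> = Qf (nA b A \<beta>) (nB b A \<beta>) z"
    unfolding Qf_def nA_complex nB_def D_def by (simp add: algebra_simps power2_eq_square)
  finally show ?thesis unfolding w_def D_def .
qed

lemma cn2: "(complex_of_real (cmod z))^2 = z * cnj z"
  by (metis complex_norm_square of_real_power)

lemma nondeg_transform: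
  "(cmod (nB b A \<beta>))^2 - (nA b A \<beta>)^2 = (1 - (cmod b)^2)^2 * ((cmod \<beta>)^2 - A^2)"
proof -
  have "complex_of_real ((cmod (nB b A \<beta>))^2 - (nA b A \<beta>)^2) =
        complex_of_real ((1 - (cmod b)^2)^2 * ((cmod \<beta>)^2 - A^2))"
    unfolding nB_def by (simp only: of_real_diff of_real_mult of_real_power of_real_1 cn2 nA_complex)
      (simp add: algebra_simps power2_eq_square)
  then show ?thesis using of_real_eq_iff by blast
qed
lemma nondeg_pres: "cmod b < 1 \<Longrightarrow> A^2 < (cmod \<beta>)^2 \<Longrightarrow> (nA b A \<beta>)^2 < (cmod (nB b A \<beta>))^2"
proof -
  assume b: "cmod b < 1" and nd: "A^2 < (cmod \<beta>)^2"
  have "(cmod b)^2 < 1" using b by (metis abs_norm_cancel abs_square_less_1)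
  then have "(1 - (cmod b)^2)^2 > 0" by simp
  then have "(1 - (cmod b)^2)^2 * ((cmod \<beta>)^2 - A^2) > 0" using nd by simp
  then show ?thesis using nondeg_transform[of b A \<beta>] by linarith
qed

lemma sigma_image_gset:
  assumes b: "cmod b < 1"
  shows "sigma b ` gset A \<beta> = gset (nA b A \<beta>) (nB b A \<beta>)"
proof (intro set_eqI iffI)
  fix z assume "z \<in> sigma b ` gset A \<beta>"
  then obtain w where w: "w \<in> gset A \<beta>" "z = sigma b w" by blast
  have wd: "cmod w < 1" "Qf A \<beta> w = 0" using w(1) unfolding gset_Qf by auto
  have zd: "cmod z < 1" using sigma_disk[OF b wd(1)] w(2) by simp
  have "sigma (-b) z = w" using sigma_inv[OF b wd(1)] w(2) by simp
  then have "Qf (nA b A \<beta>) (nB b A \<beta>) z = 0" using Qf_transform[OF b zd, of A \<beta>] wd(2) by simp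
  then show "z \<in> gset (nA b A \<beta>) (nB b A \<beta>)" using zd unfolding gset_Qf by simp
next
  fix z assume "z \<in> gset (nA b A \<beta>) (nB b A \<beta>)"
  then have zd: "cmod z < 1" and q: "Qf (nA b A \<beta>) (nB b A \<beta>) z = 0" unfolding gset_Qf by auto
  have Dn: "1 + cnj b * z \<noteq> 0" using den_nz[of "-b" z] b zd by simp
  have Dn2: "1 + b * cnj z \<noteq> 0" using Dn by (metis complex_cnj_add complex_cnj_cnj complex_cnj_mult complex_cnj_one complex_cnj_zero)
  have q2: "Qf A \<beta> (sigma (-b) z) = 0" using Qf_transform[OF b zd, of A \<beta>] q Dn Dn2 by simp
  have md: "cmod (-b) < 1" using b by simp
  have wd: "cmod (sigma (-b) z) < 1" using sigma_disk[OF md zd] .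
  have "sigma b (sigma (-b) z) = z" using sigma_inv[OF md zd] by simp
  moreover have "sigma (-b) z \<in> gset A \<beta>" using wd q2 unfolding gset_Qf by simp
  ultimately show "z \<in> sigma b ` gset A \<beta>" by (metis image_eqI)
qed

lemma hgeo_subset: "is_hgeodesic G \<Longrightarrow> G \<subseteq> {z. cmod z < 1}"
  unfolding hgeo_iff gset_def by auto

lemma hgeo_sigma: "cmod b < 1 \<Longrightarrow> is_hgeodesic G \<Longrightarrow> is_hgeodesic (sigma b ` G)"
  unfolding hgeo_iff using sigma_image_gset nondeg_pres by metis



lemma gset_0_A: "0 \<in> gset A \<beta> \<Longrightarrow> A = 0"
  unfolding gset_Qf Qf_def by simp

lemma line_normal:
  assumes b: "\<beta> \<noteq> 0" and w: "w \<noteq> 0" and wm: "w \<in> gset 0 \<beta>"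
  shows "gset 0 \<beta> = gset 0 (\<i> * w)"
proof -
  define t where "t = cnj w * \<beta>"
  have q: "cnj \<beta> * w + \<beta> * cnj w = 0" using wm unfolding gset_def by simp
  have "cnj t + t = 0" using q unfolding t_def by (simp add: algebra_simps)
  then have "Re t = 0" by (simp add: complex_eq_iff)
  then have "t = \<i> * complex_of_real (Im t)" by (simp add: complex_eq_iff)
  then obtain s where ti: "t = \<i> * complex_of_real s" by blast
  have ww: "w * cnj w = complex_of_real ((cmod w)^2)" by (rule complex_norm_square[symmetric])
  have wn: "cmod w \<noteq> 0" using w by simp
  have "\<beta> * (w * cnj w) = t * w" unfolding t_def by (simp add: algebra_simps)
  moreover have "w * cnj w \<noteq> 0" using w by simp
  ultimately have "\<beta> = t * w / (w * cnj w)" by (simp add: eq_divide_eq)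
  then have "\<beta> = t * w / complex_of_real ((cmod w)^2)" using ww by simp
  then have be: "\<beta> = complex_of_real (s / (cmod w)^2) * (\<i> * w)"
    using ti by (simp add: of_real_divide mult_ac)
  have c0: "s / (cmod w)^2 \<noteq> 0" using b be by auto
  have "gset 0 \<beta> = gset ((s / (cmod w)^2) * 0) (complex_of_real (s / (cmod w)^2) * (\<i> * w))"
    by (simp only: mult_zero_right be[symmetric])
  also have "\<dots> = gset 0 (\<i> * w)" using c0 by (rule gset_scale)
  finally show ?thesis .
qed

lemma image_back: "cmod b < 1 \<Longrightarrow> S \<subseteq> {z. cmod z < 1} \<Longrightarrow> sigma (-b) ` sigma b ` S = S"
proof -
  assume b: "cmod b < 1" and S: "S \<subseteq> {z. cmod z < 1}"
  have "sigma (-b) ` sigma b ` S = (\<lambda>z. sigma (-b) (sigma b z)) ` S" by (simp add: image_image)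
  also have "\<dots> = (\<lambda>z. z) ` S" using S sigma_inv[OF b] by (intro image_cong) auto
  finally show ?thesis by simp
qed

lemma geo_unique:
  assumes G1: "is_hgeodesic G1" and G2: "is_hgeodesic G2"
    and p1: "p \<in> G1" and p2: "p \<in> G2" and q1: "q \<in> G1" and q2: "q \<in> G2" and pq: "p \<noteq> q"
  shows "G1 = G2"
proof -
  have S1: "G1 \<subseteq> {z. cmod z < 1}" and S2: "G2 \<subseteq> {z. cmod z < 1}" using hgeo_subset G1 G2 by auto
  have pd: "cmod p < 1" and qd: "cmod q < 1" using S1 p1 q1 by auto
  define w where "w = sigma p q"
  have w0: "w \<noteq> 0" unfolding w_def using sigma_inj[OF pd pd qd] pq sigma_self[of p] by metis
  have H: "\<exists>\<beta>. \<beta> \<noteq> 0 \<and> sigma p ` G = gset 0 \<beta> \<and> w \<in> gset 0 \<beta>"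
    if G: "is_hgeodesic G" "p \<in> G" "q \<in> G" for G
  proof -
    obtain A \<beta> where nd: "A^2 < (cmod \<beta>)^2" and e: "sigma p ` G = gset A \<beta>"
      using hgeo_sigma[OF pd G(1)] unfolding hgeo_iff by blast
    have "0 \<in> sigma p ` G" using G(2) sigma_self[of p] by (metis image_eqI)
    then have A0: "A = 0" using e gset_0_A by simp
    have "w \<in> sigma p ` G" using G(3) unfolding w_def by simp
    then show ?thesis using nd e A0 by (intro exI[of _ \<beta>]) auto
  qed
  obtain \<beta>1 where b1: "\<beta>1 \<noteq> 0" "sigma p ` G1 = gset 0 \<beta>1" "w \<in> gset 0 \<beta>1" using H[OF G1 p1 q1] by blast
  obtain \<beta>2 where b2: "\<beta>2 \<noteq> 0" "sigma p ` G2 = gset 0 \<beta>2" "w \<in> gset 0 \<beta>2" using H[OF G2 p2 q2] by blast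
  have "sigma p ` G1 = sigma p ` G2" using b1 b2 line_normal[OF b1(1) w0 b1(3)] line_normal[OF b2(1) w0 b2(3)] by simp
  then have "sigma (-p) ` sigma p ` G1 = sigma (-p) ` sigma p ` G2" by simp
  then show ?thesis using image_back[OF pd S1] image_back[OF pd S2] by simp
qed

lemma gset_line_geo: "w \<noteq> 0 \<Longrightarrow> is_hgeodesic (gset 0 (\<i> * w))"
  unfolding hgeo_iff by (intro exI[of _ 0] exI[of _ "\<i> * w"]) (simp add: norm_mult)

lemma gset_line_mem: "cmod z < 1 \<Longrightarrow> Im (cnj w * z) = 0 \<Longrightarrow> z \<in> gset 0 (\<i> * w)"
proof -
  assume z: "cmod z < 1" and i: "Im (cnj w * z) = 0"
  have "cnj (\<i> * w) * z + (\<i> * w) * cnj z = - \<i> * (cnj w * z - cnj (cnj w * z))"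
    by (simp add: algebra_simps)
  also have "cnj w * z - cnj (cnj w * z) = 0" using i by (simp add: complex_eq_iff)
  finally show ?thesis using z unfolding gset_def by simp
qed

lemma geo_exists:
  assumes pd: "cmod p < 1" and qd: "cmod q < 1" and pq: "p \<noteq> q"
  shows "\<exists>G. is_hgeodesic G \<and> p \<in> G \<and> q \<in> G"
proof -
  define w where "w = sigma p q"
  have w0: "w \<noteq> 0" unfolding w_def using sigma_inj[OF pd pd qd] pq sigma_self[of p] by metis
  have wd: "cmod w < 1" unfolding w_def using sigma_disk[OF pd qd] .
  have m0: "0 \<in> gset 0 (\<i> * w)" by (rule gset_line_mem) auto
  have mw: "w \<in> gset 0 (\<i> * w)" using wd by (intro gset_line_mem) (auto simp: complex_eq_iff)
  have md: "cmod (-p) < 1" using pd by simp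
  have "sigma (-p) 0 = p" by (simp add: sigma_zero)
  moreover have "sigma (-p) w = q" unfolding w_def using sigma_inv[OF pd qd] .
  ultimately show ?thesis using hgeo_sigma[OF md gset_line_geo[OF w0]] m0 mw
    by (intro exI[of _ "sigma (-p) ` gset 0 (\<i> * w)"] conjI) (auto intro!: image_eqI)
qed

lemma hgeodesic_props:
  assumes "cmod p < 1" "cmod q < 1" "p \<noteq> q"
  shows "is_hgeodesic (hgeodesic p q) \<and> p \<in> hgeodesic p q \<and> q \<in> hgeodesic p q"
proof -
  obtain G where G: "is_hgeodesic G" "p \<in> G" "q \<in> G" using geo_exists[OF assms] by blast
  have "\<exists>!G. is_hgeodesic G \<and> p \<in> G \<and> q \<in> G"
  proof (rule ex1I[of _ G])
    show "is_hgeodesic G \<and> p \<in> G \<and> q \<in> G" using G by simp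
  next
    fix G' assume "is_hgeodesic G' \<and> p \<in> G' \<and> q \<in> G'"
    then show "G' = G" using geo_unique[of G' G p q] G assms(3) by simp
  qed
  then show ?thesis unfolding hgeodesic_def by (rule theI')
qed

lemma hgeodesic_eq:
  assumes "is_hgeodesic G" "p \<in> G" "q \<in> G" "p \<noteq> q"
  shows "hgeodesic p q = G"
  unfolding hgeodesic_def
proof (rule the_equality)
  show "is_hgeodesic G \<and> p \<in> G \<and> q \<in> G" using assms by simp
next
  fix G' assume "is_hgeodesic G' \<and> p \<in> G' \<and> q \<in> G'"
  then show "G' = G" using geo_unique[of G' G p q] assms by simp
qed

lemma hgeodesic_sigma:
  assumes b: "cmod b < 1" and pd: "cmod p < 1" and qd: "cmod q < 1" and pq: "p \<noteq> q"
  shows "hgeodesic (sigma b p) (sigma b q) = sigma b ` hgeodesic p q"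
proof -
  have h: "is_hgeodesic (hgeodesic p q)" "p \<in> hgeodesic p q" "q \<in> hgeodesic p q"
    using hgeodesic_props[OF pd qd pq] by auto
  have "sigma b p \<noteq> sigma b q" using sigma_inj[OF b pd qd] pq by blast
  then show ?thesis using h hgeo_sigma[OF b h(1)] by (intro hgeodesic_eq) auto
qed

lemma zero_on_hgeodesic: "cmod w < 1 \<Longrightarrow> w \<noteq> 0 \<Longrightarrow> 0 \<in> hgeodesic w (- w)"
proof -
  assume wd: "cmod w < 1" and w0: "w \<noteq> 0"
  have mw: "w \<in> gset 0 (\<i> * w)" using wd by (intro gset_line_mem) (auto simp: complex_eq_iff)
  have mw2: "- w \<in> gset 0 (\<i> * w)" using wd by (intro gset_line_mem) (auto simp: complex_eq_iff)
  have m0: "0 \<in> gset 0 (\<i> * w)" by (rule gset_line_mem) auto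
  have "w \<noteq> - w" using w0 by (simp add: complex_eq_iff)
  then have "hgeodesic w (-w) = gset 0 (\<i> * w)" using gset_line_geo[OF w0] mw mw2 by (intro hgeodesic_eq)
  then show ?thesis using m0 by simp
qed



abbreviation "Dk \<equiv> {z::complex. cmod z < 1}"

lemma sigma_cont: "cmod b < 1 \<Longrightarrow> continuous_on Dk (sigma b)"
  unfolding sigma_def by (intro continuous_intros) (auto dest: den_nz[of b])

lemma sigma_image_disk: "cmod b < 1 \<Longrightarrow> X \<subseteq> Dk \<Longrightarrow> sigma b ` X \<subseteq> Dk"
  using sigma_disk by auto

lemma cc_image_sub:
  assumes b: "cmod b < 1" and X: "X \<subseteq> Dk" and x: "x \<in> X"
  shows "sigma b ` connected_component_set X x \<subseteq> connected_component_set (sigma b ` X) (sigma b x)"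
proof (rule connected_component_maximal)
  show "sigma b x \<in> sigma b ` connected_component_set X x"
    using x by (simp add: connected_component_refl)
  have "continuous_on (connected_component_set X x) (sigma b)"
    using sigma_cont[OF b] connected_component_subset[of X x] X by (metis continuous_on_subset order_trans)
  then show "connected (sigma b ` connected_component_set X x)"
    by (intro connected_continuous_image connected_connected_component)
  show "sigma b ` connected_component_set X x \<subseteq> sigma b ` X"
    using connected_component_subset by (rule image_mono)
qed

lemma cc_image:
  assumes b: "cmod b < 1" and X: "X \<subseteq> Dk" and x: "x \<in> X"
  shows "connected_component_set (sigma b ` X) (sigma b x) = sigma b ` connected_component_set X x"
proof
  show "sigma b ` connected_component_set X x \<subseteq> connected_component_set (sigma b ` X) (sigma b x)"
    by (rule cc_image_sub[OF assms])
  have mb: "cmod (-b) < 1" using b by simp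
  have X2: "sigma b ` X \<subseteq> Dk" using sigma_image_disk[OF b X] .
  have xd: "cmod x < 1" using X x by auto
  have "sigma (-b) ` connected_component_set (sigma b ` X) (sigma b x)
      \<subseteq> connected_component_set (sigma (-b) ` sigma b ` X) (sigma (-b) (sigma b x))"
    using x by (intro cc_image_sub[OF mb X2]) auto
  also have "\<dots> = connected_component_set X x" using image_back[OF b X] sigma_inv[OF b xd] by simp
  finally have "sigma b ` sigma (-b) ` connected_component_set (sigma b ` X) (sigma b x)
      \<subseteq> sigma b ` connected_component_set X x" by (rule image_mono)
  moreover have "sigma b ` sigma (-b) ` connected_component_set (sigma b ` X) (sigma b x)
      = connected_component_set (sigma b ` X) (sigma b x)"
    using image_back[OF mb order_trans[OF connected_component_subset X2]] by simp
  ultimately show "connected_component_set (sigma b ` X) (sigma b x) \<subseteq> sigma b ` connected_component_set X x"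
    by simp
qed

lemma sigma_tendsto: "cmod b < 1 \<Longrightarrow> cmod p < 1 \<Longrightarrow> (sigma b \<longlongrightarrow> sigma b p) (at p within S)"
  unfolding sigma_def by (intro tendsto_intros) (auto dest: den_nz[of b])

lemma filterlim_sigma:
  assumes b: "cmod b < 1" and S: "S \<subseteq> Dk" and p: "cmod p < 1"
  shows "filterlim (sigma b) (at (sigma b p) within sigma b ` S) (at p within S)"
  unfolding filterlim_at
proof
  show "\<forall>\<^sub>F x in at p within S. sigma b x \<in> sigma b ` S \<and> sigma b x \<noteq> sigma b p"
    unfolding eventually_at_filter
    by (rule always_eventually) (use S sigma_inj[OF b _ p] in auto)
  show "(sigma b \<longlongrightarrow> sigma b p) (at p within S)" by (rule sigma_tendsto[OF b p])
qed

definition Kf :: "complex \<Rightarrow> complex \<Rightarrow> complex \<Rightarrow> complex" where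
  "Kf b z p = (1 - cnj b * b) / ((1 - cnj b * z) * (1 - cnj b * p))"

lemma Kf_nz: "cmod b < 1 \<Longrightarrow> cmod z < 1 \<Longrightarrow> cmod p < 1 \<Longrightarrow> Kf b z p \<noteq> 0"
  unfolding Kf_def using den_nz[of b b] den_nz[of b z] den_nz[of b p] by simp

lemma transport_lim:
  assumes b: "cmod b < 1" and C: "C \<subseteq> Dk" and p: "cmod p < 1" and pC: "p \<notin> C"
    and lim: "((\<lambda>z. sgn (z - p)) \<longlongrightarrow> d) (at p within C)"
    and nt: "at p within C \<noteq> bot"
  shows "((\<lambda>w. sgn (w - sigma b p)) \<longlongrightarrow> d * sgn (Kf b p p)) (at (sigma b p) within sigma b ` C)"
    and "at (sigma b p) within sigma b ` C \<noteq> bot"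
proof -
  have mb: "cmod (-b) < 1" using b by simp
  have C2: "sigma b ` C \<subseteq> Dk" using sigma_image_disk[OF b C] .
  have sp: "cmod (sigma b p) < 1" using sigma_disk[OF b p] .
  have f1: "filterlim (sigma (-b)) (at p within C) (at (sigma b p) within sigma b ` C)"
    using filterlim_sigma[OF mb C2 sp] image_back[OF b C] sigma_inv[OF b p] by simp
  have f2: "filterlim (sigma b) (at (sigma b p) within sigma b ` C) (at p within C)"
    using filterlim_sigma[OF b C p] .
  show "at (sigma b p) within sigma b ` C \<noteq> bot"
  proof
    assume "at (sigma b p) within sigma b ` C = bot"
    then have "filtermap (sigma b) (at p within C) = bot" using f2 unfolding filterlim_def
      by (simp add: bot_unique)
    then show False using nt filtermap_bot_iff by blast
  qed
  have t1: "((\<lambda>w. sgn (sigma (-b) w - p)) \<longlongrightarrow> d) (at (sigma b p) within sigma b ` C)"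
    using filterlim_compose[OF lim f1] .
  have t0: "(sigma (-b) \<longlongrightarrow> p) (at (sigma b p) within sigma b ` C)"
    using f1 unfolding filterlim_at by blast
  have t2: "((\<lambda>w. sgn (Kf b (sigma (-b) w) p)) \<longlongrightarrow> sgn (Kf b p p)) (at (sigma b p) within sigma b ` C)"
    unfolding Kf_def using den_nz[of b b] den_nz[of b p] b p
    by (intro tendsto_intros t0) auto
  have ev: "\<forall>\<^sub>F w in at (sigma b p) within sigma b ` C.
      sgn (sigma (-b) w - p) * sgn (Kf b (sigma (-b) w) p) = sgn (w - sigma b p)"
    unfolding eventually_at_filter
  proof (rule always_eventually, intro allI impI)
    fix w assume "w \<in> sigma b ` C"
    then obtain z where z: "z \<in> C" "w = sigma b z" by blast
    have zd: "cmod z < 1" using z C by auto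
    have "sigma (-b) w = z" using z sigma_inv[OF b zd] by simp
    then show "sgn (sigma (-b) w - p) * sgn (Kf b (sigma (-b) w) p) = sgn (w - sigma b p)"
      using sigma_diff[OF b zd p] z(2) unfolding Kf_def by (simp add: sgn_mult)
  qed
  show "((\<lambda>w. sgn (w - sigma b p)) \<longlongrightarrow> d * sgn (Kf b p p)) (at (sigma b p) within sigma b ` C)"
    using tendsto_cong[OF ev] tendsto_mult[OF t1 t2] by simp
qed



definition CC :: "complex \<Rightarrow> complex \<Rightarrow> complex set" where
  "CC p q = connected_component_set (hgeodesic p q - {p}) q"

lemma CC_sub: "cmod p < 1 \<Longrightarrow> cmod q < 1 \<Longrightarrow> p \<noteq> q \<Longrightarrow> CC p q \<subseteq> Dk \<and> p \<notin> CC p q"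
  using hgeodesic_props[of p q] hgeo_subset[of "hgeodesic p q"] connected_component_subset[of "hgeodesic p q - {p}" q]
  unfolding CC_def by blast

lemma CC_sigma:
  assumes b: "cmod b < 1" and p: "cmod p < 1" and q: "cmod q < 1" and pq: "p \<noteq> q"
  shows "CC (sigma b p) (sigma b q) = sigma b ` CC p q"
proof -
  let ?G = "hgeodesic p q"
  have h: "is_hgeodesic ?G" "p \<in> ?G" "q \<in> ?G" using hgeodesic_props[OF p q pq] by auto
  have GD: "?G \<subseteq> Dk" using hgeo_subset[OF h(1)] .
  have inj: "inj_on (sigma b) Dk" unfolding inj_on_def using sigma_inj[OF b] by blast
  have "hgeodesic (sigma b p) (sigma b q) - {sigma b p} = sigma b ` ?G - sigma b ` {p}"
    using hgeodesic_sigma[OF b p q pq] by simp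
  also have "\<dots> = sigma b ` (?G - {p})"
    using inj GD p by (intro inj_on_image_set_diff[symmetric]) auto
  finally have e: "hgeodesic (sigma b p) (sigma b q) - {sigma b p} = sigma b ` (?G - {p})" .
  have "connected_component_set (sigma b ` (?G - {p})) (sigma b q) = sigma b ` connected_component_set (?G - {p}) q"
    using GD h pq by (intro cc_image[OF b]) auto
  then show ?thesis unfolding CC_def e .
qed

lemma geo_transport:
  assumes b: "cmod b < 1" and p: "cmod p < 1" and q: "cmod q < 1" and pq: "p \<noteq> q"
    and lim: "((\<lambda>z. sgn (z - p)) \<longlongrightarrow> d) (at p within CC p q)"
    and nt: "at p within CC p q \<noteq> bot"
  shows "((\<lambda>w. sgn (w - sigma b p)) \<longlongrightarrow> d * sgn (Kf b p p)) (at (sigma b p) within CC (sigma b p) (sigma b q))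
       \<and> at (sigma b p) within CC (sigma b p) (sigma b q) \<noteq> bot"
  using transport_lim[OF b _ p _ lim nt] CC_sub[OF p q pq] CC_sigma[OF b p q pq] by simp

lemma base_case:
  assumes wd: "cmod w < 1" and w0: "w \<noteq> 0"
  shows "((\<lambda>z. sgn (z - 0)) \<longlongrightarrow> sgn w) (at 0 within CC 0 w) \<and> at 0 within CC 0 w \<noteq> bot"
proof -
  let ?L = "gset 0 (\<i> * w)"
  have mw: "w \<in> ?L" using wd by (intro gset_line_mem) (auto simp: complex_eq_iff)
  have m0: "0 \<in> ?L" by (rule gset_line_mem) auto
  have G0: "hgeodesic 0 w = ?L" using gset_line_geo[OF w0] m0 mw w0 by (intro hgeodesic_eq) auto
  let ?C = "connected_component_set (?L - {0}) w"
  have CCe: "CC 0 w = ?C" unfolding CC_def G0 ..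
  have Lim: "Im (cnj w * z) = 0" if "z \<in> ?L" for z
  proof -
    have "cnj (\<i> * w) * z + (\<i> * w) * cnj z = 0" using that unfolding gset_def by simp
    then have "- \<i> * (cnj w * z - cnj (cnj w * z)) = 0" by (simp add: algebra_simps)
    then show ?thesis by (simp add: complex_eq_iff mult.commute)
  qed
  define U where "U = {z. 0 < Re (cnj w * z)}"
  define V where "V = {z. Re (cnj w * z) < 0}"
  have oU: "open U" unfolding U_def by (intro open_Collect_less continuous_intros)
  have oV: "open V" unfolding V_def by (intro open_Collect_less continuous_intros)
  have wC: "w \<in> ?C" using mw w0 by (simp add: connected_component_refl)
  have CUV: "?C \<subseteq> U \<union> V"
  proof
    fix z assume "z \<in> ?C"
    then have z: "z \<in> ?L" "z \<noteq> 0" using connected_component_subset by blast+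
    have "cnj w * z \<noteq> 0" using z w0 by simp
    then have "Re (cnj w * z) \<noteq> 0" using Lim[OF z(1)] by (simp add: complex_eq_iff)
    then show "z \<in> U \<union> V" unfolding U_def V_def by auto
  qed
  have "U \<inter> V \<inter> ?C = {}" unfolding U_def V_def by auto
  then have "U \<inter> ?C = {} \<or> V \<inter> ?C = {}" using connectedD[OF connected_connected_component oU oV _ CUV] by blast
  moreover have "w \<in> U" unfolding U_def using w0
    by (simp add: complex_eq_iff) (metis not_sum_squares_lt_zero complex_eq_iff zero_complex.sel add_cancel_left_left linorder_neqE_linordered_idom sum_squares_eq_zero_iff)
  ultimately have "V \<inter> ?C = {}" using wC by blast
  then have CU: "?C \<subseteq> U" using CUV by blast
  have sg: "sgn z = sgn w" if "z \<in> ?C" for z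
  proof -
    have z: "z \<in> ?L" using that connected_component_subset by blast
    have pos: "0 < Re (cnj w * z)" using CU that unfolding U_def by blast
    have cr: "cnj w * z = complex_of_real (Re (cnj w * z))" using Lim[OF z] by (simp add: complex_eq_iff)
    have wn: "w * cnj w = complex_of_real ((cmod w)^2)" by (rule complex_norm_square[symmetric])
    have "z = w * (cnj w * z) / (w * cnj w)" using w0 by (simp add: field_simps)
    also have "\<dots> = w * complex_of_real (Re (cnj w * z) / (cmod w)^2)"
      by (subst cr, subst wn) (simp add: of_real_divide)
    finally have "sgn z = sgn w * sgn (complex_of_real (Re (cnj w * z) / (cmod w)^2))"
      by (metis sgn_mult)
    also have "\<dots> = sgn w * complex_of_real (sgn (Re (cnj w * z) / (cmod w)^2))"
      by (simp only: sgn_of_real)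
    also have "\<dots> = sgn w"
    proof -
      have r: "Re (cnj w * z) / (cmod w)^2 > 0" using w0 by (intro divide_pos_pos pos) simp
      show ?thesis using r by (simp only: sgn_pos of_real_1 mult_1_right)
    qed
    finally show ?thesis .
  qed
  have lim: "((\<lambda>z. sgn (z - 0)) \<longlongrightarrow> sgn w) (at 0 within ?C)"
  proof -
    have "\<forall>\<^sub>F z in at 0 within ?C. sgn w = sgn (z - 0)"
      unfolding eventually_at_filter by (rule always_eventually) (auto simp: sg)
    then show ?thesis by (rule iffD1[OF tendsto_cong tendsto_const])
  qed
  define S where "S = (\<lambda>t. complex_of_real t * w) ` {0<..1}"
  have SC: "S \<subseteq> ?C"
  proof (rule connected_component_maximal)
    show "w \<in> S" unfolding S_def by (rule image_eqI[of _ _ 1]) auto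
    show "connected S" unfolding S_def by (intro connected_continuous_image continuous_intros) auto
    show "S \<subseteq> ?L - {0}"
    proof
      fix z assume "z \<in> S"
      then obtain t where t: "0 < t" "t \<le> 1" "z = complex_of_real t * w" unfolding S_def by auto
      have "cmod z \<le> cmod w" using t by (simp add: norm_mult mult_left_le_one_le)
      then have "cmod z < 1" using wd by simp
      moreover have "Im (cnj w * z) = 0" using t by (simp add: algebra_simps)
      moreover have "z \<noteq> 0" using t w0 by simp
      ultimately show "z \<in> ?L - {0}" by (simp add: gset_line_mem)
    qed
  qed
  have "0 islimpt S"
    unfolding islimpt_approachable
  proof (intro allI impI)
    fix e :: real assume e: "0 < e"
    define t where "t = min 1 (e / (2 * cmod w))"
    have t: "0 < t" "t \<le> 1" using e w0 unfolding t_def by auto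
    have "t \<le> e / (2 * cmod w)" unfolding t_def by simp
    then have "t * cmod w \<le> e / (2 * cmod w) * cmod w" by (rule mult_right_mono) simp
    also have "\<dots> = e / 2" using w0 by simp
    finally have "t * cmod w \<le> e / 2" .
    then have "cmod (complex_of_real t * w) < e" using t e by (simp add: norm_mult)
    moreover have "complex_of_real t * w \<in> S" unfolding S_def using t by auto
    moreover have "complex_of_real t * w \<noteq> 0" using t w0 by simp
    ultimately show "\<exists>x'\<in>S. x' \<noteq> 0 \<and> dist x' 0 < e"
      by (intro bexI[of _ "complex_of_real t * w"]) auto
  qed
  then have "0 islimpt ?C" using SC islimpt_subset by blast
  then have "at 0 within ?C \<noteq> bot" using trivial_limit_within by blast
  then show ?thesis using lim CCe by simp
qed

lemma td_exists:
  assumes p: "cmod p < 1" and q: "cmod q < 1" and pq: "p \<noteq> q"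
  shows "\<exists>d. ((\<lambda>z. sgn (z - p)) \<longlongrightarrow> d) (at p within CC p q) \<and> at p within CC p q \<noteq> bot"
proof -
  define w where "w = sigma p q"
  have w0: "w \<noteq> 0" unfolding w_def using sigma_inj[OF p p q] pq sigma_self[of p] by metis
  have wd: "cmod w < 1" unfolding w_def using sigma_disk[OF p q] .
  have mp: "cmod (-p) < 1" using p by simp
  have z0: "cmod (0::complex) < 1" by simp
  have e1: "sigma (-p) 0 = p" by (simp add: sigma_zero)
  have e2: "sigma (-p) w = q" unfolding w_def using sigma_inv[OF p q] .
  show ?thesis using geo_transport[OF mp z0 wd, of "sgn w"] base_case[OF wd w0] w0 e1 e2 by auto
qed

lemma tangent_dir_sgn: "tangent_dir G p q = Lim (at p within connected_component_set (G - {p}) q) (\<lambda>z. sgn (z - p))"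
  unfolding tangent_dir_def sgn_eq ..

lemma td_sigma:
  assumes b: "cmod b < 1" and p: "cmod p < 1" and q: "cmod q < 1" and pq: "p \<noteq> q"
  shows "tangent_dir (hgeodesic (sigma b p) (sigma b q)) (sigma b p) (sigma b q)
       = tangent_dir (hgeodesic p q) p q * sgn (Kf b p p)"
proof -
  obtain d where d: "((\<lambda>z. sgn (z - p)) \<longlongrightarrow> d) (at p within CC p q)" "at p within CC p q \<noteq> bot"
    using td_exists[OF p q pq] by blast
  have t1: "tangent_dir (hgeodesic p q) p q = d"
    unfolding tangent_dir_sgn using d by (simp add: CC_def tendsto_Lim)
  have t2: "tangent_dir (hgeodesic (sigma b p) (sigma b q)) (sigma b p) (sigma b q) = d * sgn (Kf b p p)"
    unfolding tangent_dir_sgn using geo_transport[OF b p q pq d] by (simp add: CC_def tendsto_Lim)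
  show ?thesis using t1 t2 by simp
qed

lemma hangle_sigma:
  assumes b: "cmod b < 1" and v: "cmod v < 1" and u: "cmod u < 1" and w: "cmod w < 1"
    and vu: "v \<noteq> u" and vw: "v \<noteq> w"
  shows "hangle (sigma b v) (sigma b u) (sigma b w) = hangle v u w"
proof -
  define l where "l = sgn (Kf b v v)"
  have "Kf b v v \<noteq> 0" using Kf_nz[OF b v v] .
  then have l1: "l * cnj l = 1" unfolding l_def
    by (metis complex_norm_square norm_sgn of_real_1 one_power2)
  have "\<And>x y. Re (x * l * cnj (y * l)) = Re (x * cnj y)"
    using l1 by (simp add: algebra_simps)
  then show ?thesis unfolding hangle_def td_sigma[OF b v u vu] td_sigma[OF b v w vw] l_def[symmetric] by simp
qed



lemma arg02_bounds: "0 \<le> arg02 z \<and> arg02 z < 2 * pi"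
  using Arg_bounded[of z] unfolding arg02_def by auto

lemma polar02: "z = complex_of_real (cmod z) * cis (arg02 z)"
proof -
  have "cis (arg02 z) = cis (Arg z)"
    unfolding arg02_def by (simp add: complex_eq_iff)
  then show ?thesis using rcis_cmod_Arg[of z] unfolding rcis_def by simp
qed

lemma cis_eq_ex: "cis x = cis y \<Longrightarrow> \<exists>m::int. x = y + 2 * pi * m"
proof -
  assume "cis x = cis y"
  then have "sin x = sin y \<and> cos x = cos y" by (metis cis.sel)
  then show ?thesis using sin_cos_eq_iff by blast
qed

lemma root_arg:
  assumes n: "n \<ge> 1" and a0: "a \<noteq> 0" and z: "z ^ n = a"
  shows "\<exists>m::nat. m < n \<and> arg02 z = arg02 a / n + 2 * pi * m / n"
proof -
  have z0: "z \<noteq> 0" using z a0 n by auto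
  have "z ^ n = (complex_of_real (cmod z) * cis (arg02 z)) ^ n"
    by (simp only: polar02[of z, symmetric])
  also have "\<dots> = complex_of_real (cmod z ^ n) * cis (real n * arg02 z)"
    by (simp only: power_mult_distrib Complex.DeMoivre of_real_power)
  finally have e0: "z ^ n = complex_of_real (cmod z ^ n) * cis (real n * arg02 z)" .
  have ca: "cmod a = cmod z ^ n" using z norm_power[of z n] by simp
  have "a = z ^ n" using z by simp
  also note e0
  finally have e1: "a = complex_of_real (cmod a) * cis (real n * arg02 z)" using ca by simp
  have e2: "a = complex_of_real (cmod a) * cis (arg02 a)" by (rule polar02)
  have "cis (real n * arg02 z) = cis (arg02 a)"
  proof -
    have "complex_of_real (cmod a) \<noteq> 0" using a0 by simp
    then show ?thesis using e1 e2 by (metis mult_left_cancel)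
  qed
  then obtain m :: int where m: "real n * arg02 z = arg02 a + 2 * pi * m" using cis_eq_ex by blast
  have b1: "0 \<le> arg02 z" "arg02 z < 2 * pi" "0 \<le> arg02 a" "arg02 a < 2 * pi" using arg02_bounds by auto
  have nr: "real n \<ge> 1" using n by simp
  have "0 \<le> real n * arg02 z" using b1 nr by simp
  then have "0 \<le> arg02 a + 2 * pi * m" using m by simp
  then have "2 * pi * (m + 1) > 0" using b1 by (simp add: algebra_simps)
  then have "real_of_int m + 1 > 0" using pi_gt_zero by (simp add: zero_less_mult_iff)
  then have m0: "m \<ge> 0" by linarith
  have "real n * arg02 z < real n * (2 * pi)" using b1 nr by simp
  then have "arg02 a + 2 * pi * m < 2 * pi * real n" using m by (simp add: algebra_simps)
  then have "2 * pi * m < 2 * pi * real n" using b1 by linarith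
  then have "real_of_int m < real n" using pi_gt_zero by simp
  then have mn: "m < int n" by linarith
  have "arg02 z = arg02 a / n + 2 * pi * real (nat m) / n"
    using m m0 nr by (simp add: field_simps)
  then show ?thesis using mn m0 by (intro exI[of _ "nat m"]) auto
qed

lemma strict_mono_fin:
  fixes f :: "nat \<Rightarrow> nat"
  assumes mono: "\<And>i. i + 1 < n \<Longrightarrow> f i < f (i + 1)" and bnd: "\<And>i. i < n \<Longrightarrow> f i < n"
    and i: "i < n"
  shows "f i = i"
proof -
  have gen: "i + d < n \<Longrightarrow> f i + d \<le> f (i + d)" for i d
  proof (induction d)
    case 0 then show ?case by simp
  next
    case (Suc d)
    then have "f i + d \<le> f (i + d)" by simp
    moreover have "f (i + d) < f (i + d + 1)" using Suc.prems by (intro mono) simp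
    ultimately show ?case by simp
  qed
  have "f 0 + i \<le> f i" using gen[of 0 i] i by simp
  moreover have "f i + (n - 1 - i) \<le> f (n - 1)" using gen[of i "n - 1 - i"] i by simp
  moreover have "f (n - 1) < n" using bnd i by simp
  ultimately show ?thesis by linarith
qed



lemma per_mod:
  assumes periodic: "\<And>j. \<omega> (j + int n) = \<omega> j" and n: "n \<ge> 1"
  shows "\<omega> j = \<omega> (j mod int n)"
proof -
  have pn: "\<omega> (j + int n * int m) = \<omega> j" for j m
  proof (induction m)
    case 0 then show ?case by simp
  next
    case (Suc m)
    have "\<omega> (j + int n * int (Suc m)) = \<omega> ((j + int n * int m) + int n)" by (simp add: algebra_simps)
    also have "\<dots> = \<omega> j" using periodic Suc.IH by simp
    finally show ?case .
  qed
  have jd: "j = j mod int n + int n * (j div int n)" by simp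
  show ?thesis
  proof (cases "j div int n \<ge> 0")
    case True
    then have "j = j mod int n + int n * int (nat (j div int n))" using jd by simp
    then have "\<omega> j = \<omega> (j mod int n + int n * int (nat (j div int n)))" by (rule arg_cong)
    also have "\<dots> = \<omega> (j mod int n)" by (rule pn)
    finally show ?thesis .
  next
    case False
    then have "j mod int n = j + int n * int (nat (- (j div int n)))" using jd by (simp add: algebra_simps)
    then have "\<omega> (j mod int n) = \<omega> (j + int n * int (nat (- (j div int n))))" by (rule arg_cong)
    also have "\<dots> = \<omega> j" by (rule pn)
    finally show ?thesis by simp
  qed
qed

lemma roots_opp:
  fixes k n :: nat and a :: complex and \<omega> :: "int \<Rightarrow> complex"
  assumes k: "k \<ge> 1" and n: "n = 2 * k" and a0: "a \<noteq> 0"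
    and roots: "\<And>j. \<omega> j ^ n = a"
    and periodic: "\<And>j. \<omega> (j + int n) = \<omega> j"
    and sorted: "\<And>i j. 0 \<le> i \<Longrightarrow> i < j \<Longrightarrow> j < int n \<Longrightarrow> arg02 (\<omega> i) < arg02 (\<omega> j)"
  shows "\<omega> (j + int k) = - \<omega> j"
proof -
  have n1: "n \<ge> 1" using k n by simp
  have nr: "real n > 0" using n1 by simp
  define \<theta> where "\<theta> = arg02 a / n"
  define mf where "mf i = (SOME m. m < n \<and> arg02 (\<omega> (int i)) = \<theta> + 2 * pi * m / n)" for i
  have mfp: "mf i < n \<and> arg02 (\<omega> (int i)) = \<theta> + 2 * pi * mf i / n" for i
    unfolding mf_def \<theta>_def using root_arg[OF n1 a0 roots[of "int i"]] by (rule someI_ex)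
  have mono: "mf i < mf (i + 1)" if "i + 1 < n" for i
  proof -
    have "arg02 (\<omega> (int i)) < arg02 (\<omega> (int (i + 1)))" using that by (intro sorted) auto
    then have "2 * pi * mf i / n < 2 * pi * mf (i + 1) / n" using mfp[of i] mfp[of "i+1"] by simp
    then have "real (mf i) < real (mf (i + 1))" using nr pi_gt_zero
      by (simp add: divide_less_cancel)
    then show ?thesis by simp
  qed
  have mfi: "mf i = i" if "i < n" for i
    using strict_mono_fin[of n mf i] mono mfp that by blast
  have argi: "arg02 (\<omega> (int i)) = \<theta> + 2 * pi * i / n" if "i < n" for i
    using mfp[of i] mfi[OF that] by simp
  have modc: "cmod (\<omega> j) = cmod (\<omega> 0)" for j
  proof -
    have "cmod (\<omega> j) ^ n = cmod a" using roots[of j] norm_power[of "\<omega> j" n] by simp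
    moreover have "cmod (\<omega> 0) ^ n = cmod a" using roots[of 0] norm_power[of "\<omega> 0" n] by simp
    ultimately have "cmod (\<omega> j) ^ n = cmod (\<omega> 0) ^ n" by simp
    then show ?thesis using n1 power_eq_imp_eq_base[of "cmod (\<omega> j)" n "cmod (\<omega> 0)"] by simp
  qed
  have low: "\<omega> (int i + int k) = - \<omega> (int i)" if "i < k" for i
  proof -
    have "arg02 (\<omega> (int (i + k))) = \<theta> + 2 * pi * (i + k) / n" using argi[of "i + k"] that n by simp
    also have "\<dots> = arg02 (\<omega> (int i)) + pi" using argi[of i] that n k by (simp add: field_simps)
    finally have ar: "arg02 (\<omega> (int i + int k)) = arg02 (\<omega> (int i)) + pi" by simp
    have "\<omega> (int i + int k) = complex_of_real (cmod (\<omega> (int i + int k))) * cis (arg02 (\<omega> (int i + int k)))"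
      by (rule polar02)
    also have "\<dots> = complex_of_real (cmod (\<omega> 0)) * cis (arg02 (\<omega> (int i)) + pi)"
      by (simp only: ar modc[of "int i + int k"])
    also have "\<dots> = - (complex_of_real (cmod (\<omega> (int i))) * cis (arg02 (\<omega> (int i))))"
      using modc[of "int i"] by (simp add: minus_cis[symmetric])
    also have "\<dots> = - \<omega> (int i)" using polar02[of "\<omega> (int i)"] by simp
    finally show ?thesis .
  qed
  have nat_case: "\<omega> (int i + int k) = - \<omega> (int i)" if "i < n" for i
  proof (cases "i < k")
    case True then show ?thesis using low by simp
  next
    case False
    define i' where "i' = i - k"
    have i': "i' < k" "i = i' + k" using False that n unfolding i'_def by auto
    have "\<omega> (int i + int k) = \<omega> (int i' + int n)" using i' n by (simp add: algebra_simps)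
    also have "\<dots> = \<omega> (int i')" by (rule periodic)
    also have "\<dots> = - \<omega> (int i' + int k)" using low[OF i'(1)] by simp
    also have "\<dots> = - \<omega> (int i)" using i' by simp
    finally show ?thesis .
  qed
  define i where "i = nat (j mod int n)"
  have np: "int n > 0" using n1 by simp
  have i: "i < n" "int i = j mod int n" using pos_mod_bound[OF np, of j] pos_mod_sign[OF np, of j]
    unfolding i_def by linarith+
  have "\<omega> (j + int k) = \<omega> ((j + int k) mod int n)" by (rule per_mod[of \<omega> n, OF periodic n1])
  also have "(j + int k) mod int n = (int i + int k) mod int n" using i by (simp add: mod_add_left_eq)
  also have "\<omega> \<dots> = \<omega> (int i + int k)" by (rule per_mod[of \<omega> n, OF periodic n1, symmetric])
  also have "\<dots> = - \<omega> (int i)" using nat_case[OF i(1)] .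
  also have "\<omega> (int i) = \<omega> j" using per_mod[of \<omega> n, OF periodic n1, of j] i by simp
  finally show ?thesis .
qed



theorem proposition3p7:
  fixes k :: nat and n :: nat and a :: complex and \<omega> :: "int \<Rightarrow> complex"
  assumes "k \<ge> 1" and "n = 2 * k"
    and "cmod a < 1" and "a \<noteq> 0"
    and roots: "\<And>j. \<omega> j ^ n = a"
    and periodic: "\<And>j. \<omega> (j + int n) = \<omega> j"
    and sorted: "\<And>i j. 0 \<le> i \<Longrightarrow> i < j \<Longrightarrow> j < int n \<Longrightarrow> arg02 (\<omega> i) < arg02 (\<omega> j)"
  shows "(\<forall>j. sigma a (- \<omega> j) = sigma a (\<omega> (j + int k)) \<and>
              - a \<in> hgeodesic (sigma a (\<omega> j)) (sigma a (\<omega> (j + int k))))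
       \<and> (\<forall>j. hangle (sigma a (\<omega> j)) (sigma a (\<omega> (j - 1))) (sigma a (\<omega> (j + 1)))
              = hangle (\<omega> j) (\<omega> (j - 1)) (\<omega> (j + 1)))"
proof -
  note k = assms(1) and n = assms(2) and ad = assms(3) and a0 = assms(4)
  have n1: "n \<ge> 1" and n2: "n \<ge> 2" using k n by auto
  have wd: "cmod (\<omega> j) < 1" for j
  proof (rule ccontr)
    assume "\<not> cmod (\<omega> j) < 1"
    then have "1 \<le> cmod (\<omega> j) ^ n" by (intro one_le_power) simp
    also have "cmod (\<omega> j) ^ n = cmod a" using roots[of j] norm_power[of "\<omega> j" n] by simp
    finally show False using ad by simp
  qed
  have w0: "\<omega> j \<noteq> 0" for j
  proof
    assume "\<omega> j = 0"
    then have "a = 0" using roots[of j] n1 by (metis power_0_left not_one_le_zero)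
    then show False using a0 by simp
  qed
  have opp: "\<omega> (j + int k) = - \<omega> j" for j
    by (rule roots_opp[of k n a \<omega>, OF k n a0 roots periodic sorted])
  have inj: "\<omega> i \<noteq> \<omega> i'" if "0 \<le> i" "i < int n" "0 \<le> i'" "i' < int n" "i \<noteq> i'" for i i'
  proof (cases "i < i'")
    case True then show ?thesis using sorted[of i i'] that by auto
  next
    case False then have "i' < i" using that by simp
    then show ?thesis using sorted[of i' i] that by auto
  qed
  have np: "int n > 0" using n1 by simp
  have adj: "\<omega> j \<noteq> \<omega> (j + d)" if d: "d = 1 \<or> d = -1" for j d
  proof -
    have "j mod int n \<noteq> (j + d) mod int n"
    proof
      assume "j mod int n = (j + d) mod int n"
      then have "int n dvd (j - (j + d))" by (simp add: mod_eq_dvd_iff)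
      then have "int n dvd 1" using d by auto
      then have "int n \<le> 1" by (rule zdvd_imp_le) simp
      then show False using n2 by simp
    qed
    then have "\<omega> (j mod int n) \<noteq> \<omega> ((j + d) mod int n)"
      using pos_mod_bound[OF np] pos_mod_sign[OF np] by (intro inj) auto
    then show ?thesis using per_mod[of \<omega> n, OF periodic n1] by metis
  qed
  have part1: "sigma a (- \<omega> j) = sigma a (\<omega> (j + int k)) \<and>
              - a \<in> hgeodesic (sigma a (\<omega> j)) (sigma a (\<omega> (j + int k)))" for j
  proof -
    have mw: "cmod (- \<omega> j) < 1" using wd[of j] by simp
    have ne: "\<omega> j \<noteq> - \<omega> j" using w0[of j] by (simp add: complex_eq_iff)
    have "hgeodesic (sigma a (\<omega> j)) (sigma a (- \<omega> j)) = sigma a ` hgeodesic (\<omega> j) (- \<omega> j)"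
      by (rule hgeodesic_sigma[OF ad wd mw ne])
    moreover have "0 \<in> hgeodesic (\<omega> j) (- \<omega> j)" by (rule zero_on_hgeodesic[OF wd w0])
    ultimately have "- a \<in> hgeodesic (sigma a (\<omega> j)) (sigma a (- \<omega> j))"
      using sigma_zero[of a] by (metis image_eqI)
    then show ?thesis using opp[of j] by simp
  qed
  have part2: "hangle (sigma a (\<omega> j)) (sigma a (\<omega> (j - 1))) (sigma a (\<omega> (j + 1)))
              = hangle (\<omega> j) (\<omega> (j - 1)) (\<omega> (j + 1))" for j
  proof -
    have "\<omega> j \<noteq> \<omega> (j - 1)" using adj[of "-1" j] by simp
    moreover have "\<omega> j \<noteq> \<omega> (j + 1)" using adj[of 1 j] by simp
    ultimately show ?thesis by (intro hangle_sigma[OF ad wd wd wd])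
  qed
  show ?thesis using part1 part2 by blast
qed

end
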